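(* Let $\alpha,\beta$ be cardinals with $\alpha>2$ and $\beta>2$. The class of $(\alpha,\beta)$-representable posets has no universal first-order axiomatization (in the signature consisting of one binary relation $\leq$).
   Context: For posets $P,Q$, a monotone map $h:P\to Q$ is an $(\alpha,\beta)$-morphism if whenever $S\subseteq P$ with $|S|<\alpha$ and $\bigwedge S$ exists in $P$, then $h(\bigwedge S)=\bigwedge h[S]$, and whenever $T\subseteq P$ with $|T|<\beta$ and $\bigvee T$ exists in $P$, then $h(\bigvee T)=\bigvee h[T]$. A poset $P$ is $(\alpha,\beta)$-representable if there is a set $X$ and an $(\alpha,\beta)$-morphism $h:P\to\wp(X)$ that is an order embedding, where $\wp(X)$ is the power set of $X$ ordered by inclusion. *)

theory Defs
  imports Main
begin

datatype fm =
    FEq nat nat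
  | FLe nat nat
  | FFalse
  | FNeg fm
  | FConj fm fm
  | FDisj fm fm
  | FImp fm fm
  | FAll nat fm
  | FEx nat fm

fun qfree :: "fm \<Rightarrow> bool" where
  "qfree (FEq x y) = True"
| "qfree (FLe x y) = True"
| "qfree FFalse = True"
| "qfree (FNeg p) = qfree p"
| "qfree (FConj p q) = (qfree p \<and> qfree q)"
| "qfree (FDisj p q) = (qfree p \<and> qfree q)"
| "qfree (FImp p q) = (qfree p \<and> qfree q)"
| "qfree (FAll x p) = False"
| "qfree (FEx x p) = False"

fun freevars :: "fm \<Rightarrow> nat set" where
  "freevars (FEq x y) = {x, y}"
| "freevars (FLe x y) = {x, y}"
| "freevars FFalse = {}"
| "freevars (FNeg p) = freevars p"
| "freevars (FConj p q) = freevars p \<union> freevars q"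
| "freevars (FDisj p q) = freevars p \<union> freevars q"
| "freevars (FImp p q) = freevars p \<union> freevars q"
| "freevars (FAll x p) = freevars p - {x}"
| "freevars (FEx x p) = freevars p - {x}"

fun universal :: "fm \<Rightarrow> bool" where
  "universal (FAll x p) = universal p"
| "universal p = qfree p"

definition universal_sentence :: "fm \<Rightarrow> bool" where
  "universal_sentence p \<longleftrightarrow> universal p \<and> freevars p = {}"

fun sat :: "'a set \<Rightarrow> ('a \<Rightarrow> 'a \<Rightarrow> bool) \<Rightarrow> (nat \<Rightarrow> 'a) \<Rightarrow> fm \<Rightarrow> bool" where
  "sat A R e (FEq x y) = (e x = e y)"
| "sat A R e (FLe x y) = R (e x) (e y)"
| "sat A R e FFalse = False"
| "sat A R e (FNeg p) = (\<not> sat A R e p)"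
| "sat A R e (FConj p q) = (sat A R e p \<and> sat A R e q)"
| "sat A R e (FDisj p q) = (sat A R e p \<or> sat A R e q)"
| "sat A R e (FImp p q) = (sat A R e p \<longrightarrow> sat A R e q)"
| "sat A R e (FAll x p) = (\<forall>a\<in>A. sat A R (e(x := a)) p)"
| "sat A R e (FEx x p) = (\<exists>a\<in>A. sat A R (e(x := a)) p)"

definition fo_models :: "'a set \<Rightarrow> ('a \<Rightarrow> 'a \<Rightarrow> bool) \<Rightarrow> fm set \<Rightarrow> bool" where
  "fo_models A R T \<longleftrightarrow> (\<forall>p\<in>T. \<forall>e. (\<forall>n. e n \<in> A) \<longrightarrow> sat A R e p)"

definition poset_on :: "'a set \<Rightarrow> ('a \<Rightarrow> 'a \<Rightarrow> bool) \<Rightarrow> bool" where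
  "poset_on A R \<longleftrightarrow> (\<forall>x\<in>A. R x x)
     \<and> (\<forall>x\<in>A. \<forall>y\<in>A. R x y \<and> R y x \<longrightarrow> x = y)
     \<and> (\<forall>x\<in>A. \<forall>y\<in>A. \<forall>z\<in>A. R x y \<and> R y z \<longrightarrow> R x z)"

definition is_meet :: "'a set \<Rightarrow> ('a \<Rightarrow> 'a \<Rightarrow> bool) \<Rightarrow> 'a set \<Rightarrow> 'a \<Rightarrow> bool" where
  "is_meet A R S m \<longleftrightarrow> m \<in> A \<and> (\<forall>s\<in>S. R m s) \<and> (\<forall>x\<in>A. (\<forall>s\<in>S. R x s) \<longrightarrow> R x m)"

definition is_join :: "'a set \<Rightarrow> ('a \<Rightarrow> 'a \<Rightarrow> bool) \<Rightarrow> 'a set \<Rightarrow> 'a \<Rightarrow> bool" where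
  "is_join A R S m \<longleftrightarrow> m \<in> A \<and> (\<forall>s\<in>S. R s m) \<and> (\<forall>x\<in>A. (\<forall>s\<in>S. R s x) \<longrightarrow> R m x)"

text \<open>Cardinals are cardinal orders (of arbitrary types); |S| < alpha is card_of S <o alpha.
  The meet in the powerset of X of a family is its intersection (X for the empty family),
  the join is its union.\<close>
definition ab_morphism_pow ::
  "'k rel \<Rightarrow> 'l rel \<Rightarrow> 'a set \<Rightarrow> ('a \<Rightarrow> 'a \<Rightarrow> bool) \<Rightarrow> 'b set \<Rightarrow> ('a \<Rightarrow> 'b set) \<Rightarrow> bool" where
  "ab_morphism_pow \<alpha> \<beta> A R X h \<longleftrightarrow>
     (\<forall>x\<in>A. h x \<subseteq> X)
   \<and> (\<forall>x\<in>A. \<forall>y\<in>A. R x y \<longrightarrow> h x \<subseteq> h y)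
   \<and> (\<forall>S m. S \<subseteq> A \<and> (card_of S, \<alpha>) \<in> ordLess \<and> is_meet A R S m \<longrightarrow> h m = X \<inter> \<Inter> (h ` S))
   \<and> (\<forall>T m. T \<subseteq> A \<and> (card_of T, \<beta>) \<in> ordLess \<and> is_join A R T m \<longrightarrow> h m = \<Union> (h ` T))"

definition order_embedding_on :: "'a set \<Rightarrow> ('a \<Rightarrow> 'a \<Rightarrow> bool) \<Rightarrow> ('a \<Rightarrow> 'b set) \<Rightarrow> bool" where
  "order_embedding_on A R h \<longleftrightarrow> (\<forall>x\<in>A. \<forall>y\<in>A. R x y \<longleftrightarrow> h x \<subseteq> h y)"

text \<open>The set X is taken to be a set of subsets of the
  carrier type; this is without loss of generality (replace each point x of an arbitrary X by
  the set of elements p with x in h p).\<close>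
definition ab_representable ::
  "'k rel \<Rightarrow> 'l rel \<Rightarrow> 'a set \<Rightarrow> ('a \<Rightarrow> 'a \<Rightarrow> bool) \<Rightarrow> bool" where
  "ab_representable \<alpha> \<beta> A R \<longleftrightarrow> poset_on A R \<and>
     (\<exists>(X :: 'a set set) h. ab_morphism_pow \<alpha> \<beta> A R X h \<and> order_embedding_on A R h)"

end

theory Submission
  imports Defs
begin

lemma qfree_sat_indep: "qfree p \<Longrightarrow> sat A R e p = sat B R e p"
  by (induction p arbitrary: e) auto

lemma universal_down:
  assumes "universal p" "B \<subseteq> A" "\<forall>n. e n \<in> B" "sat A R e p"
  shows "sat B R e p"
  using assms
proof (induction p arbitrary: e)
  case (FAll x p)
  show ?case
  proof (simp, intro ballI)
    fix a assume a: "a \<in> B"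
    have "\<forall>n. (e(x := a)) n \<in> B" using FAll(4) a by auto
    moreover have "sat A R (e(x := a)) p" using FAll(5) a FAll(3) by auto
    ultimately show "sat B R (e(x := a)) p" using FAll by auto
  qed
qed ((rule qfree_sat_indep[THEN iffD1, of _ A], simp, assumption)+)

lemma rep_lemma:
  fixes H :: "'a \<Rightarrow> 'a set set"
  assumes inj: "inj_on H A" and sub: "\<forall>x\<in>A. H x \<subseteq> X"
    and meets: "\<forall>S. S \<subseteq> A \<longrightarrow> (\<exists>m\<in>A. H m = X \<inter> \<Inter>(H ` S))"
    and joins: "\<forall>S. S \<subseteq> A \<longrightarrow> (\<exists>m\<in>A. H m = \<Union>(H ` S))"
  shows "ab_representable \<alpha> \<beta> A (\<lambda>x y. H x \<subseteq> H y)"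
proof -
  have po: "poset_on A (\<lambda>x y. H x \<subseteq> H y)"
    unfolding poset_on_def
  proof (intro conjI ballI impI)
    fix x y assume "x \<in> A" "y \<in> A" "H x \<subseteq> H y \<and> H y \<subseteq> H x"
    then show "x = y" using inj inj_onD[of H A x y] by blast
  qed auto
  have M: "H m = X \<inter> \<Inter>(H ` S)" if SA: "S \<subseteq> A" and mt: "is_meet A (\<lambda>x y. H x \<subseteq> H y) S m" for S m
  proof -
    obtain m' where m': "m' \<in> A" "H m' = X \<inter> \<Inter>(H ` S)" using meets[rule_format, OF SA] by (elim bexE)
    have mm: "m \<in> A" "\<forall>s\<in>S. H m \<subseteq> H s" "\<forall>x\<in>A. (\<forall>s\<in>S. H x \<subseteq> H s) \<longrightarrow> H x \<subseteq> H m"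
      using mt unfolding is_meet_def by blast+
    have "\<forall>s\<in>S. H m' \<subseteq> H s" unfolding m'(2) by blast
    then have "H m' \<subseteq> H m" using mm(3) m'(1) by blast
    moreover have "H m \<subseteq> H m'"
    proof -
      have "H m \<subseteq> X" using sub mm(1) by blast
      then show ?thesis using mm(2) unfolding m'(2) by blast
    qed
    ultimately have "H m = H m'" by (intro subset_antisym)
    then show ?thesis using m'(2) by simp
  qed
  have J: "H m = \<Union>(H ` S)" if SA: "S \<subseteq> A" and mt: "is_join A (\<lambda>x y. H x \<subseteq> H y) S m" for S m
  proof -
    obtain m' where m': "m' \<in> A" "H m' = \<Union>(H ` S)" using joins[rule_format, OF SA] by (elim bexE)
    have mm: "m \<in> A" "\<forall>s\<in>S. H s \<subseteq> H m" "\<forall>x\<in>A. (\<forall>s\<in>S. H s \<subseteq> H x) \<longrightarrow> H m \<subseteq> H x"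
      using mt unfolding is_join_def by blast+
    have "\<forall>s\<in>S. H s \<subseteq> H m'" unfolding m'(2) by blast
    then have "H m \<subseteq> H m'" using mm(3) m'(1) by blast
    moreover have "H m' \<subseteq> H m" using mm(2) unfolding m'(2) by blast
    ultimately have "H m = H m'" by (rule subset_antisym)
    then show ?thesis using m'(2) by simp
  qed
  have "ab_morphism_pow \<alpha> \<beta> A (\<lambda>x y. H x \<subseteq> H y) X H"
    unfolding ab_morphism_pow_def
  proof (intro conjI allI impI)
    show "\<forall>x\<in>A. H x \<subseteq> X" by (rule sub)
  next
    show "\<forall>x\<in>A. \<forall>y\<in>A. H x \<subseteq> H y \<longrightarrow> H x \<subseteq> H y" by simp
  next
    fix S m assume "S \<subseteq> A \<and> (card_of S, \<alpha>) \<in> ordLess \<and> is_meet A (\<lambda>x y. H x \<subseteq> H y) S m"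
    then show "H m = X \<inter> \<Inter>(H ` S)" using M by simp
  next
    fix S m assume "S \<subseteq> A \<and> (card_of S, \<beta>) \<in> ordLess \<and> is_join A (\<lambda>x y. H x \<subseteq> H y) S m"
    then show "H m = \<Union>(H ` S)" using J by simp
  qed
  moreover have "order_embedding_on A (\<lambda>x y. H x \<subseteq> H y) H"
    unfolding order_embedding_on_def by auto
  ultimately show ?thesis unfolding ab_representable_def using po by (intro conjI exI)
qed

lemma two_less:
  assumes "(card_of {0::nat, 1}, \<alpha>) \<in> ordLess"
  shows "(card_of {a, c}, \<alpha>) \<in> ordLess"
proof -
  have "\<exists>f. inj_on f {a, c} \<and> f ` {a, c} \<subseteq> {0::nat, 1}"
    by (rule exI[of _ "\<lambda>x. if x = a then 0 else 1"]) (simp add: inj_on_def)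
  then have "(card_of {a, c}, card_of {0::nat, 1}) \<in> ordLeq"
    by (rule card_of_ordLeq[THEN iffD1])
  then show ?thesis using assms by (rule ordLeq_ordLess_trans)
qed

theorem corollary2p9:
  fixes \<alpha> :: "'k rel" and \<beta> :: "'l rel"
  assumes "Card_order \<alpha>" and "Card_order \<beta>"
    and "(card_of {0::nat, 1}, \<alpha>) \<in> ordLess" and "(card_of {0::nat, 1}, \<beta>) \<in> ordLess"
    and "infinite (UNIV :: 'a set)"
  shows "\<not> (\<exists>T. (\<forall>p\<in>T. universal_sentence p) \<and>
            (\<forall>(A :: 'a set) R. A \<noteq> {} \<longrightarrow> (fo_models A R T \<longleftrightarrow> ab_representable \<alpha> \<beta> A R)))"
proof
  assume "\<exists>T. (\<forall>p\<in>T. universal_sentence p) \<and>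
            (\<forall>(A :: 'a set) R. A \<noteq> {} \<longrightarrow> (fo_models A R T \<longleftrightarrow> ab_representable \<alpha> \<beta> A R))"
  then obtain T where TU: "\<forall>p\<in>T. universal_sentence p"
    and TA: "\<And>(A :: 'a set) R. A \<noteq> {} \<Longrightarrow> (fo_models A R T \<longleftrightarrow> ab_representable \<alpha> \<beta> A R)"
    by blast
  obtain x0 :: 'a where True by blast
  define p1 :: "'a set" where "p1 = {}"
  define p2 :: "'a set" where "p2 = UNIV"
  define p3 :: "'a set" where "p3 = {x0}"
  have d12: "p1 \<noteq> p2" "p1 \<noteq> p3" unfolding p1_def p2_def p3_def by auto
  have d23: "p2 \<noteq> p3" unfolding p2_def p3_def using assms(5)
    by (metis finite.emptyI finite_insert)
  define Y where "Y = {p1, p2, p3}"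
  obtain f :: "nat \<Rightarrow> 'a" where f: "inj f" using infinite_countable_subset[OF assms(5)] by blast
  obtain k and n :: nat where k: "k ` Pow Y = {i. i < n}" "inj_on k (Pow Y)"
    using finite_imp_inj_to_nat_seg[of "Pow Y"] unfolding Y_def by auto
  define g where "g = f \<circ> k"
  have ginj: "inj_on g (Pow Y)" unfolding g_def using f k(2)
    by (simp add: comp_inj_on inj_on_subset)
  define G where "G = inv_into (Pow Y) g"
  have GG: "G (g S) = S" if "S \<subseteq> Y" for S
    unfolding G_def using ginj that by (simp add: inv_into_f_f)
  define A where "A = g ` Pow Y"
  define R where "R = (\<lambda>x y. G x \<subseteq> G y)"
  have Ginj: "inj_on G A" unfolding A_def inj_on_def using GG by auto
  have repA: "ab_representable \<alpha> \<beta> A R"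
    unfolding R_def
  proof (rule rep_lemma[where X = Y])
    show "inj_on G A" by (rule Ginj)
    show "\<forall>x\<in>A. G x \<subseteq> Y" unfolding A_def using GG by auto
    show "\<forall>S. S \<subseteq> A \<longrightarrow> (\<exists>m\<in>A. G m = Y \<inter> \<Inter>(G ` S))"
    proof (intro allI impI)
      fix S assume "S \<subseteq> A"
      show "\<exists>m\<in>A. G m = Y \<inter> \<Inter>(G ` S)"
        by (rule bexI[of _ "g (Y \<inter> \<Inter>(G ` S))"]) (auto simp: A_def GG)
    qed
    show "\<forall>S. S \<subseteq> A \<longrightarrow> (\<exists>m\<in>A. G m = \<Union>(G ` S))"
    proof (intro allI impI)
      fix S assume S: "S \<subseteq> A"
      have "\<Union>(G ` S) \<subseteq> Y" using S unfolding A_def using GG by auto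
      then show "\<exists>m\<in>A. G m = \<Union>(G ` S)"
        by (intro bexI[of _ "g (\<Union>(G ` S))"]) (auto simp: A_def GG)
    qed
  qed
  have "A \<noteq> {}" unfolding A_def by auto
  then have mA: "fo_models A R T" using TA repA by blast
  define z where "z = g {}"
  define a where "a = g {p1}"
  define b where "b = g {p2}"
  define c where "c = g {p3}"
  define t where "t = g Y"
  define Q where "Q = {z, a, b, c, t}"
  have Gz: "G z = {}" and Ga: "G a = {p1}" and Gb: "G b = {p2}" and Gc: "G c = {p3}"
    and Gt: "G t = Y"
    unfolding z_def a_def b_def c_def t_def using GG Y_def by auto
  have QA: "Q \<subseteq> A" unfolding Q_def A_def z_def a_def b_def c_def t_def Y_def by auto
  have "fo_models Q R T"
    unfolding fo_models_def
  proof (intro ballI allI impI)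
    fix p and e :: "nat \<Rightarrow> 'a" assume p: "p \<in> T" and e: "\<forall>n. e n \<in> Q"
    have "sat A R e p" using mA p e QA unfolding fo_models_def by blast
    moreover have "universal p" using TU p unfolding universal_sentence_def by blast
    ultimately show "sat Q R e p" using universal_down QA e by blast
  qed
  moreover have "Q \<noteq> {}" unfolding Q_def by auto
  ultimately have "ab_representable \<alpha> \<beta> Q R" using TA by blast
  then obtain X :: "'a set set" and h where
    hm: "ab_morphism_pow \<alpha> \<beta> Q R X h" and he: "order_embedding_on Q R h"
    unfolding ab_representable_def by blast
  have HM: "\<And>S m. S \<subseteq> Q \<Longrightarrow> (card_of S, \<alpha>) \<in> ordLess \<Longrightarrow> is_meet Q R S m \<Longrightarrow> h m = X \<inter> \<Inter>(h ` S)"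
    using conjunct1[OF conjunct2[OF conjunct2[OF hm[unfolded ab_morphism_pow_def]]]] by blast
  have HJ: "\<And>S m. S \<subseteq> Q \<Longrightarrow> (card_of S, \<beta>) \<in> ordLess \<Longrightarrow> is_join Q R S m \<Longrightarrow> h m = \<Union>(h ` S)"
    using conjunct2[OF conjunct2[OF conjunct2[OF hm[unfolded ab_morphism_pow_def]]]] by blast
  have HX: "\<And>x. x \<in> Q \<Longrightarrow> h x \<subseteq> X"
    using conjunct1[OF hm[unfolded ab_morphism_pow_def]] by blast
  have HE: "\<And>x y. x \<in> Q \<Longrightarrow> y \<in> Q \<Longrightarrow> R x y \<longleftrightarrow> h x \<subseteq> h y"
    using he unfolding order_embedding_on_def by blast
  have d: "p1 \<noteq> p2" "p1 \<noteq> p3" "p2 \<noteq> p3" "p2 \<noteq> p1" "p3 \<noteq> p1" "p3 \<noteq> p2"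
    using d12 d23 by auto
  have Yne: "\<not> Y \<subseteq> {p1}" "\<not> Y \<subseteq> {p2}" "\<not> Y \<subseteq> {p3}" "\<not> Y \<subseteq> {}"
    unfolding Y_def using d by auto
  have meet_ac: "is_meet Q R {a, c} z"
    unfolding is_meet_def Q_def R_def by (simp add: Gz Ga Gb Gc Gt d Yne)
  have meet_bc: "is_meet Q R {b, c} z"
    unfolding is_meet_def Q_def R_def by (simp add: Gz Ga Gb Gc Gt d Yne)
  have join_ab: "is_join Q R {a, b} t"
    unfolding is_join_def Q_def R_def by (simp add: Gz Ga Gb Gc Gt d Yne Y_def)
  have inQ: "z \<in> Q" "a \<in> Q" "b \<in> Q" "c \<in> Q" "t \<in> Q" unfolding Q_def by simp_all
  have h1: "h z = X \<inter> \<Inter>(h ` {a, c})"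
    by (rule HM[OF _ two_less[OF assms(3)] meet_ac]) (simp add: inQ)
  have h2: "h z = X \<inter> \<Inter>(h ` {b, c})"
    by (rule HM[OF _ two_less[OF assms(3)] meet_bc]) (simp add: inQ)
  have h3: "h t = \<Union>(h ` {a, b})"
    by (rule HJ[OF _ two_less[OF assms(4)] join_ab]) (simp add: inQ)
  have cX: "h c \<subseteq> X" using HX inQ by blast
  have "R c t" unfolding R_def using Gc Gt Y_def by simp
  then have ct: "h c \<subseteq> h t" using HE inQ by blast
  have h1': "h z = X \<inter> h a \<inter> h c" using h1 by auto
  have h2': "h z = X \<inter> h b \<inter> h c" using h2 by auto
  have h3': "h t = h a \<union> h b" using h3 by simp
  have "h c \<subseteq> h z"
  proof
    fix x assume x: "x \<in> h c"
    then have "x \<in> h a \<or> x \<in> h b" using ct h3' by blast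
    then show "x \<in> h z" using x cX h1' h2' by blast
  qed
  then have "R c z" using HE inQ by blast
  then show False using Gc Gz unfolding R_def by simp
qed

end
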